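(* Let $\alpha$ be a concentrated system of weights for rank $r$ over $D$ (with $|D|=n$), and let $I=\{1,\dots,r\}$. Let $0<r'<r$ and for each $x\in D$ let $I'(x)\subsetneq I$ be a nonempty subset with $|I'(x)|=r'$. Then $$\left|\sum_{x\in D}\left(r\sum_{i\in I'(x)}\alpha_i(x)-r'\sum_{i\in I}\alpha_i(x)\right)\right|<1.$$
   Context: A full flag system of weights for rank $r$ over a finite set $D$ of $n\ge1$ points is $\alpha=\{(\alpha_1(x),\dots,\alpha_r(x))\}_{x\in D}$ with $0\le\alpha_1(x)<\cdots<\alpha_r(x)<1$. It is concentrated if $\alpha_r(x)-\alpha_1(x)<\frac{4}{nr^2}$ for all $x\in D$. *)

theory Defs
  imports Complex_Main
begin

definition full_flag_weights :: "nat \<Rightarrow> 'a set \<Rightarrow> ('a \<Rightarrow> nat \<Rightarrow> real) \<Rightarrow> bool" where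
  "full_flag_weights r D \<alpha> \<longleftrightarrow>
     finite D \<and> D \<noteq> {} \<and> r \<ge> 1 \<and>
     (\<forall>x\<in>D. 0 \<le> \<alpha> x 1 \<and> \<alpha> x r < 1 \<and>
        (\<forall>i\<in>{1..<r}. \<alpha> x i < \<alpha> x (Suc i)))"

definition concentrated :: "nat \<Rightarrow> 'a set \<Rightarrow> ('a \<Rightarrow> nat \<Rightarrow> real) \<Rightarrow> bool" where
  "concentrated r D \<alpha> \<longleftrightarrow> full_flag_weights r D \<alpha> \<and>
     (\<forall>x\<in>D. \<alpha> x r - \<alpha> x 1 < 4 / (real (card D) * real r ^ 2))"

end

theory Submission
  imports Defs
begin

lemma mono_aux:
  assumes "\<forall>i\<in>{1..<r}. f i < (f (Suc i) :: real)" "1 \<le> i" "i \<le> j" "j \<le> r"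
  shows "f i \<le> f j"
  using assms
proof (induction j)
  case 0 then show ?case by simp
next
  case (Suc j)
  show ?case
  proof (cases "i = Suc j")
    case True then show ?thesis by simp
  next
    case False
    then have "i \<le> j" using Suc by simp
    then have "f i \<le> f j" using Suc by simp
    moreover have "f j < f (Suc j)" using Suc.prems \<open>i \<le> j\<close> by auto
    ultimately show ?thesis by simp
  qed
qed

lemma term_bound:
  fixes f :: "nat \<Rightarrow> real" and J :: "nat set"
  assumes rng: "\<And>i. i \<in> {1..r} \<Longrightarrow> a \<le> f i \<and> f i \<le> b"
    and J: "J \<subseteq> {1..r}" "card J = r'" and r': "r' < r"
  shows "\<bar>real r * (\<Sum>i\<in>J. f i) - real r' * (\<Sum>i\<in>{1..r}. f i)\<bar>
           \<le> real r' * real (r - r') * (b - a)"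
proof -
  let ?K = "{1..r} - J"
  have fin: "finite J" using J finite_subset by blast
  have split: "(\<Sum>i\<in>{1..r}. f i) = (\<Sum>i\<in>J. f i) + (\<Sum>i\<in>?K. f i)"
    using J(1) by (metis add.commute finite_atLeastAtMost sum.subset_diff)
  have cK: "card ?K = r - r'" using J fin by (simp add: card_Diff_subset)
  have s1: "(\<Sum>i\<in>J. f i) \<le> real r' * b"
    using sum_bounded_above[of J f b] rng J by (auto simp: subset_iff)
  have s2: "(\<Sum>i\<in>J. f i) \<ge> real r' * a"
    using sum_bounded_below[of J a f] rng J by (auto simp: subset_iff)
  have s3: "(\<Sum>i\<in>?K. f i) \<le> real (r - r') * b"
    using sum_bounded_above[of ?K f b] rng cK by auto
  have s4: "(\<Sum>i\<in>?K. f i) \<ge> real (r - r') * a"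
    using sum_bounded_below[of ?K a f] rng cK by auto
  have rr: "real r = real (r - r') + real r'" using r' by simp
  define S1 where "S1 = (\<Sum>i\<in>J. f i)"
  define S2 where "S2 = (\<Sum>i\<in>?K. f i)"
  have eq: "real r * S1 - real r' * (S1 + S2) = real (r - r') * S1 - real r' * S2"
    by (subst rr, simp only: algebra_simps)
  have A: "real (r - r') * S1 \<le> real (r - r') * (real r' * b)"
    using s1 by (simp add: S1_def mult_left_mono)
  have B: "real (r - r') * S1 \<ge> real (r - r') * (real r' * a)"
    using s2 by (simp add: S1_def mult_left_mono)
  have C: "real r' * S2 \<le> real r' * (real (r - r') * b)"
    using s3 by (simp add: S2_def mult_left_mono)
  have D: "real r' * S2 \<ge> real r' * (real (r - r') * a)"
    using s4 by (simp add: S2_def mult_left_mono)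
  have "\<bar>real (r - r') * S1 - real r' * S2\<bar> \<le> real r' * real (r - r') * (b - a)"
  proof -
    define p where "p = real r' * real (r - r')"
    have A': "real (r - r') * S1 \<le> p * b" using A by (simp add: p_def mult.commute mult.left_commute)
    have B': "real (r - r') * S1 \<ge> p * a" using B by (simp add: p_def mult.commute mult.left_commute)
    have C': "real r' * S2 \<le> p * b" using C by (simp add: p_def mult.commute mult.left_commute)
    have D': "real r' * S2 \<ge> p * a" using D by (simp add: p_def mult.commute mult.left_commute)
    have "p * (b - a) = p * b - p * a" by (simp add: right_diff_distrib)
    then show ?thesis unfolding p_def[symmetric] abs_le_iff using A' B' C' D' by linarith
  qed
  then show ?thesis using eq split by (simp add: S1_def S2_def)
qed

theorem lemma2p5:
  fixes D :: "'a set" and r r' :: nat and \<alpha> :: "'a \<Rightarrow> nat \<Rightarrow> real"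
    and I' :: "'a \<Rightarrow> nat set"
  assumes "concentrated r D \<alpha>"
    and "0 < r'" and "r' < r"
    and "\<And>x. x \<in> D \<Longrightarrow> I' x \<subseteq> {1..r} \<and> card (I' x) = r'"
  shows "\<bar>\<Sum>x\<in>D. (real r * (\<Sum>i\<in>I' x. \<alpha> x i) - real r' * (\<Sum>i\<in>{1..r}. \<alpha> x i))\<bar> < 1"
proof -
  note c = assms(1)[unfolded concentrated_def full_flag_weights_def]
  have fin: "finite D" and ne: "D \<noteq> {}" using c by auto
  define n where "n = card D"
  have npos: "real n > 0" using fin ne by (simp add: n_def card_gt_0_iff)
  have key: "4 * (real r' * real (r - r')) \<le> real r ^ 2"
  proof -
    have gen: "4 * (v * u) \<le> (u + v) ^ 2 \<and> 4 * (v * u) \<le> (v + u) ^ 2 \<and> 4 * (u * v) \<le> (u + v) ^ 2 \<and> 4 * (u * v) \<le> (v + u) ^ 2" for u v :: real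
    proof -
      have "0 \<le> (u - v) ^ 2" by simp
      then show ?thesis by (simp add: power2_eq_square algebra_simps)
    qed
    have "real r = real (r - r') + real r'" using assms(3) by simp
    then show ?thesis using gen[of "real (r - r')" "real r'"] by (simp only:)
  qed
  have rpos: "real r > 0" using assms by simp
  have per: "\<bar>real r * (\<Sum>i\<in>I' x. \<alpha> x i) - real r' * (\<Sum>i\<in>{1..r}. \<alpha> x i)\<bar> < 1 / real n"
    if x: "x \<in> D" for x
  proof -
    have inc: "\<forall>i\<in>{1..<r}. \<alpha> x i < \<alpha> x (Suc i)" using c x by blast
    have rng: "\<alpha> x 1 \<le> \<alpha> x i \<and> \<alpha> x i \<le> \<alpha> x r" if "i \<in> {1..r}" for i
      using mono_aux[OF inc, of 1 i] mono_aux[OF inc, of i r] that by auto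
    have b1: "\<bar>real r * (\<Sum>i\<in>I' x. \<alpha> x i) - real r' * (\<Sum>i\<in>{1..r}. \<alpha> x i)\<bar>
           \<le> real r' * real (r - r') * (\<alpha> x r - \<alpha> x 1)"
      using term_bound[OF rng, where J="I' x" and r'=r'] assms(3,4) x by auto
    have d: "\<alpha> x r - \<alpha> x 1 < 4 / (real n * real r ^ 2)" using c x n_def by auto
    have pp: "real r' * real (r - r') > 0" using assms(2,3) by simp
    have "real r' * real (r - r') * (\<alpha> x r - \<alpha> x 1)
          < real r' * real (r - r') * (4 / (real n * real r ^ 2))"
      by (rule mult_strict_left_mono[OF d pp])
    also have "\<dots> = (4 * (real r' * real (r - r'))) / real r ^ 2 / real n"
      by (simp add: field_simps)
    also have "\<dots> \<le> real r ^ 2 / real r ^ 2 / real n"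
      by (intro divide_right_mono key) (use npos in auto)
    also have "\<dots> = 1 / real n" using rpos by simp
    finally show ?thesis using b1 by linarith
  qed
  have "\<bar>\<Sum>x\<in>D. (real r * (\<Sum>i\<in>I' x. \<alpha> x i) - real r' * (\<Sum>i\<in>{1..r}. \<alpha> x i))\<bar>
        \<le> (\<Sum>x\<in>D. \<bar>real r * (\<Sum>i\<in>I' x. \<alpha> x i) - real r' * (\<Sum>i\<in>{1..r}. \<alpha> x i)\<bar>)"
    by (rule sum_abs)
  also have "\<dots> < (\<Sum>x\<in>D. 1 / real n)"
    using sum_strict_mono[OF fin ne per] by simp
  also have "\<dots> = 1" using npos n_def by simp
  finally show ?thesis .
qed

end
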